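(* For any $\beta\in(0,1)$ and any $b>0$, there exists a sequence of random variables $(X_n)_{n\ge 1}$ on some probability space such that (1) $n^\beta X_n \to 0$ in probability, (2) $|X_n|\le b$ almost surely for all $n$, and (3) the sequence $(n^\beta \bar X_n)_{n\ge1}$ is not uniformly tight, where $\bar X_n := \frac1n\sum_{i=1}^n X_i$. In particular, $n^\beta X_n\to 0$ in probability does not imply $n^\beta\bar X_n\to 0$ in probability.
   Context: A sequence of real random variables $(Z_n)_{n\ge1}$ is uniformly tight if for every $\varepsilon>0$ there exists $M<\infty$ with $\sup_n \Pr(|Z_n|>M)<\varepsilon$. $\bar X_n$ denotes the Cesàro mean $\frac1n\sum_{i=1}^n X_i$. *)

theory Defs
  imports "HOL-Probability.Probability"
begin

definition tendsto_in_prob_zero :: "'a measure \<Rightarrow> (nat \<Rightarrow> 'a \<Rightarrow> real) \<Rightarrow> bool" where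
  "tendsto_in_prob_zero M Z \<longleftrightarrow>
     (\<forall>e>0. (\<lambda>n. measure M {\<omega> \<in> space M. \<bar>Z n \<omega>\<bar> > e}) \<longlonglongrightarrow> 0)"

definition uniformly_tight :: "'a measure \<Rightarrow> (nat \<Rightarrow> 'a \<Rightarrow> real) \<Rightarrow> bool" where
  "uniformly_tight M Z \<longleftrightarrow>
     (\<forall>e>0. \<exists>K::real. (SUP n\<in>{1..}. measure M {\<omega> \<in> space M. \<bar>Z n \<omega>\<bar> > K}) < e)"

definition cesaro :: "(nat \<Rightarrow> 'a \<Rightarrow> real) \<Rightarrow> nat \<Rightarrow> 'a \<Rightarrow> real" where
  "cesaro X n \<omega> = (\<Sum>i=1..n. X i \<omega>) / real n"

end

theory Submission
  imports Defs "HOL-Real_Asymp.Real_Asymp" "HOL-Library.Discrete_Functions"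
begin

definition mm :: "nat \<Rightarrow> nat" where "mm i = floor_log i + 1"
definition rr :: "nat \<Rightarrow> nat" where "rr i = (i - 2 ^ floor_log i) mod mm i"
definition AA :: "nat \<Rightarrow> real set" where
  "AA i = {real (rr i) / real (mm i) ..< real (rr i + 1) / real (mm i)}"
definition XX :: "real \<Rightarrow> nat \<Rightarrow> real \<Rightarrow> real" where
  "XX b i \<omega> = b * indicator (AA i) \<omega>"

definition MM :: "real measure" where "MM = uniform_measure lborel {0..<1}"

lemma MM_prob: "prob_space MM"
  unfolding MM_def by (rule prob_space_uniform_measure) auto

lemma sets_MM[simp, measurable_cong]: "sets MM = sets borel"
  and space_MM[simp]: "space MM = UNIV"
  by (auto simp: MM_def)

lemma measure_MM: "B \<in> sets borel \<Longrightarrow> measure MM B = measure lborel ({0..<1} \<inter> B)"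
proof -
  assume B: "B \<in> sets borel"
  have "measure MM B = measure lborel ({0..<1} \<inter> B) / measure lborel {0..<1::real}"
    unfolding MM_def by (rule measure_uniform_measure) (use B in auto)
  thus ?thesis by simp
qed

lemma XX_meas[measurable]: "XX b i \<in> borel_measurable MM"
  unfolding XX_def AA_def by measurable

lemma measure_MM_AA: "measure MM (AA i) \<le> 1 / real (mm i)"
proof -
  have "measure MM (AA i) = measure lborel ({0..<1} \<inter> AA i)"
    by (rule measure_MM) (simp add: AA_def)
  also have "\<dots> \<le> measure lborel (AA i)"
  proof (rule measure_mono_fmeasurable)
    have "real (rr i)/real(mm i) \<le> real(rr i+1)/real(mm i)" by (simp add: divide_right_mono mm_def)
    thus "AA i \<in> fmeasurable lborel" by (simp add: AA_def fmeasurable_def)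
  qed (auto simp: AA_def)
  also have "\<dots> = 1 / real (mm i)"
    unfolding AA_def using mm_def by (simp add: measure_def divide_simps)
  finally show ?thesis .
qed

lemma mm_log: assumes "n \<ge> 2" shows "log 2 (real n) < real (mm n)"
proof -
  have "n < 2 * 2 ^ floor_log n" by (rule floor_log_exp2_gt)
  hence "real n < real (2 * 2 ^ floor_log n)" by (simp only: of_nat_less_iff)
  also have "real (2 * 2 ^ floor_log n) = (2::real) ^ (floor_log n + 1)" by simp
  also have "\<dots> = 2 powr real (mm n)" unfolding mm_def by (rule powr_realpow[symmetric]) simp
  finally have "real n < 2 powr real (mm n)" .
  thus ?thesis using assms by (subst log_less_iff) auto
qed

lemma conv_prob:
  assumes "b > 0"
  shows "tendsto_in_prob_zero MM (\<lambda>n \<omega>. real n powr \<beta> * XX b n \<omega>)"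
  unfolding tendsto_in_prob_zero_def
proof (intro allI impI)
  fix e :: real assume e: "e > 0"
  have lim: "((\<lambda>n::nat. 1 / log 2 (real n)) \<longlongrightarrow> 0) at_top" by real_asymp
  show "(\<lambda>n. measure MM {\<omega> \<in> space MM. e < \<bar>real n powr \<beta> * XX b n \<omega>\<bar>}) \<longlonglongrightarrow> 0"
  proof (rule tendsto_sandwich[OF _ _ tendsto_const lim])
    show "\<forall>\<^sub>F n in sequentially. 0 \<le> measure MM {\<omega> \<in> space MM. e < \<bar>real n powr \<beta> * XX b n \<omega>\<bar>}"
      by simp
    show "\<forall>\<^sub>F n in sequentially. measure MM {\<omega> \<in> space MM. e < \<bar>real n powr \<beta> * XX b n \<omega>\<bar>} \<le> 1 / log 2 (real n)"
      using eventually_ge_at_top[of 2]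
    proof eventually_elim
      case (elim n)
      interpret prob_space MM by (rule MM_prob)
      have "measure MM {\<omega> \<in> space MM. e < \<bar>real n powr \<beta> * XX b n \<omega>\<bar>} \<le> measure MM (AA n)"
        using e by (intro finite_measure_mono) (auto simp: XX_def AA_def indicator_def)
      also have "\<dots> \<le> 1 / real (mm n)" by (rule measure_MM_AA)
      also have "\<dots> \<le> 1 / log 2 (real n)"
      proof -
        have "0 < log 2 (real n)" using elim by simp
        thus ?thesis using mm_log[OF elim] by (intro divide_left_mono) auto
      qed
      finally show ?case .
    qed
  qed
qed

lemma hit:
  fixes \<omega> :: real and k t r0 :: nat
  assumes r0: "r0 < k + 1" and w: "real r0 / real (k+1) \<le> \<omega>" "\<omega> < real (r0+1) / real (k+1)"
    and t: "t < 2 ^ k div (k + 1)"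
  shows "XX b (2^k + r0 + (k+1)*t) \<omega> = b"
proof -
  define i where "i = 2^k + r0 + (k+1)*t"
  have "r0 + (k+1)*t < (k+1)*(t+1)" using r0 by simp
  also have "(k+1)*(t+1) \<le> (k+1) * (2^k div (k+1))" using t by (intro mult_left_mono) auto
  also have "\<dots> \<le> 2^k" using mult_div_mod_eq[of "k+1" "2^k::nat"] by linarith
  finally have lt: "r0 + (k+1)*t < 2^k" .
  have fl: "floor_log i = k"
    by (rule floor_log_eqI) (use lt in \<open>auto simp: i_def\<close>)
  have "rr i = (i - 2^k) mod (k+1)" by (simp add: rr_def mm_def fl)
  also have "\<dots> = (r0 + (k+1)*t) mod (k+1)" unfolding i_def by (simp add: add.assoc)
  also have "\<dots> = r0" using r0 by (simp only: mod_mult_self2 mod_less)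
  finally have "rr i = r0" .
  hence "\<omega> \<in> AA i" using w by (simp add: AA_def mm_def fl)
  thus ?thesis by (simp add: XX_def i_def)
qed

lemma sum_lower:
  fixes \<omega> :: real and k :: nat
  assumes b: "b > 0" and w: "0 \<le> \<omega>" "\<omega> < 1"
  shows "(\<Sum>i=1..2^(k+1). XX b i \<omega>) \<ge> b * real (2 ^ k div (k + 1))"
proof -
  define r0 where "r0 = nat \<lfloor>real (k+1) * \<omega>\<rfloor>"
  define q where "q = 2 ^ k div (k + 1)"
  define idx where "idx t = 2^k + r0 + (k+1)*t" for t
  have fl0: "0 \<le> \<lfloor>real (k+1) * \<omega>\<rfloor>" using w by simp
  have "real (k+1) * \<omega> < real (k+1)" using w by simp
  hence "\<lfloor>real (k+1) * \<omega>\<rfloor> < int (k+1)" by linarith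
  hence r0: "r0 < k + 1" using fl0 by (simp add: r0_def)
  have rr0: "real r0 = of_int \<lfloor>real (k+1) * \<omega>\<rfloor>" using fl0 by (simp add: r0_def)
  have "real r0 \<le> real (k+1) * \<omega>" using rr0 of_int_floor_le[of "real (k+1) * \<omega>"] by linarith
  hence w1: "real r0 / real (k+1) \<le> \<omega>" by (simp add: divide_simps mult.commute)
  have "real (k+1) * \<omega> < real r0 + 1" using rr0 real_of_int_floor_add_one_gt[of "real (k+1) * \<omega>"] by linarith
  hence w2: "\<omega> < real (r0+1) / real (k+1)" by (simp add: divide_simps mult.commute)
  have lt: "r0 + (k+1)*t < 2^k" if "t < q" for t
  proof -
    have "r0 + (k+1)*t < (k+1)*(t+1)" using r0 by simp
    also have "(k+1)*(t+1) \<le> (k+1) * q" using that by (intro mult_left_mono) auto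
    also have "\<dots> \<le> 2^k" using mult_div_mod_eq[of "k+1" "2^k::nat"] unfolding q_def by linarith
    finally show ?thesis .
  qed
  have sub: "idx ` {..<q} \<subseteq> {1..2^(k+1)}"
  proof
    fix x assume "x \<in> idx ` {..<q}"
    then obtain t where t: "t < q" "x = idx t" by auto
    from lt[OF t(1)] show "x \<in> {1..2^(k+1)}" by (simp add: idx_def t(2))
  qed
  have inj: "inj_on idx {..<q}"
  proof (rule inj_onI)
    fix x y assume "idx x = idx y"
    hence "(k+1)*x = (k+1)*y" unfolding idx_def by linarith
    thus "x = y" by (simp only: mult_cancel1) simp
  qed
  have "b * real q = (\<Sum>t<q. XX b (idx t) \<omega>)"
    using hit[OF r0 w1 w2] by (simp add: idx_def q_def)
  also have "\<dots> = (\<Sum>i\<in>idx ` {..<q}. XX b i \<omega>)" by (simp add: sum.reindex[OF inj])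
  also have "\<dots> \<le> (\<Sum>i=1..2^(k+1). XX b i \<omega>)"
    by (rule sum_mono2[OF _ sub]) (use b in \<open>auto simp: XX_def\<close>)
  finally show ?thesis by (simp add: q_def)
qed

lemma big:
  fixes \<beta> b K :: real
  assumes "0 < \<beta>" "\<beta> < 1" "b > 0"
  shows "\<exists>n\<ge>1. \<forall>\<omega>\<in>{0..<1}. K < \<bar>real n powr \<beta> * cesaro (XX b) n \<omega>\<bar>"
proof -
  have "filterlim (\<lambda>j::nat. 2 powr (\<beta>*real j) / (real j)) at_top at_top"
    using assms by real_asymp
  hence "\<forall>\<^sub>F j in at_top. 2 powr (\<beta>*real j) / (real j) > 2 * (K/b + 1) \<and> j \<ge> 1"
    by (intro eventually_conj) (auto simp: filterlim_at_top_dense eventually_ge_at_top)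
  then obtain j where j: "2 powr (\<beta>*real j) / (real j) > 2 * (K/b + 1)" "j \<ge> 1"
    by (auto simp: eventually_at_top_linorder)
  obtain k where k: "j = k + 1" using j(2) by (metis add.commute le_Suc_ex)
  define n :: nat where "n = 2^(k+1)"
  have npos: "real n > 0" by (simp add: n_def)
  have nr: "real n = 2 powr (real k + 1)"
    by (simp add: n_def powr_realpow[symmetric] powr_add)
  have "real n powr \<beta> / real n = 2 powr ((real k + 1) * \<beta>) / 2 powr (real k + 1)"
    by (simp add: nr powr_powr)
  also have "\<dots> = 2 powr ((real k + 1) * \<beta> - (real k + 1))" by (simp add: powr_diff)
  finally have np: "real n powr \<beta> / real n = 2 powr ((real k+1) * (\<beta>-1))" by (simp add: algebra_simps)
  have "(real k+1)*(\<beta>-1) \<le> 0" using assms by (simp add: mult_nonneg_nonpos)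
  hence p1: "2 powr ((real k+1) * (\<beta>-1)) \<le> 1"
    using powr_mono[of "(real k+1)*(\<beta>-1)" 0 "2::real"] by simp
  have "2 powr ((real k+1)*(\<beta>-1)) * 2^k = 2 powr ((real k+1)*(\<beta>-1) + real k)"
    by (simp add: powr_add powr_realpow)
  also have "(real k+1)*(\<beta>-1) + real k = \<beta>*real j - 1" by (simp add: k algebra_simps)
  also have "2 powr (\<beta>*real j - 1) = 2 powr (\<beta> * real j)/2" by (simp add: powr_diff)
  finally have p2: "2 powr ((real k+1) * (\<beta>-1)) * 2^k = 2 powr (\<beta> * real j) / 2" .
  have q: "real (2 ^ k div (k + 1)) \<ge> 2^k / real (k+1) - 1"
  proof -
    have A: "real (2 ^ k div (k + 1)) * real (k+1) + real (2^k mod (k+1)) = 2^k"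
      by (metis div_mult_mod_eq of_nat_add of_nat_mult of_nat_numeral of_nat_power)
    have "(2::nat)^k mod (k+1) < k+1" by simp
    hence B: "real (2^k mod (k+1)) \<le> real (k+1)" by (simp only: of_nat_le_iff less_imp_le)
    show ?thesis using A B by (simp add: divide_simps; linarith)
  qed
  have key: "K < b * (2 powr ((real k+1) * (\<beta>-1)) * real (2 ^ k div (k + 1)))"
  proof -
    have "2 powr ((real k+1) * (\<beta>-1)) * real (2 ^ k div (k + 1))
          \<ge> 2 powr ((real k+1) * (\<beta>-1)) * (2^k / real (k+1) - 1)"
      by (intro mult_left_mono q) auto
    also have "2 powr ((real k+1) * (\<beta>-1)) * (2^k / real (k+1) - 1)
          = 2 powr (\<beta> * real j) / 2 / real j - 2 powr ((real k+1) * (\<beta>-1))"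
    proof -
      have "2 powr ((real k+1) * (\<beta>-1)) * (2^k / real (k+1) - 1)
          = (2 powr ((real k+1) * (\<beta>-1)) * 2^k) / real (k+1) - 2 powr ((real k+1) * (\<beta>-1))"
        by (simp add: right_diff_distrib)
      also have "\<dots> = 2 powr (\<beta> * real j) / 2 / real j - 2 powr ((real k+1) * (\<beta>-1))"
        unfolding p2 k by simp
      finally show ?thesis .
    qed
    also have "\<dots> \<ge> 2 powr (\<beta> * real j) / real j / 2 - 1" using p1 by simp
    finally have F: "2 powr ((real k+1) * (\<beta>-1)) * real (2 ^ k div (k + 1)) \<ge> 2 powr (\<beta> * real j) / real j / 2 - 1" .
    have "2 powr (\<beta> * real j) / real j / 2 > K / b + 1" using j(1) by simp
    hence "2 powr ((real k+1) * (\<beta>-1)) * real (2 ^ k div (k + 1)) > K / b" using F by linarith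
    thus ?thesis using assms by (simp add: divide_simps mult.commute)
  qed
  show ?thesis
  proof (intro exI conjI ballI)
    show "1 \<le> n" by (simp add: n_def)
    fix \<omega> :: real assume w: "\<omega> \<in> {0..<1}"
    have S: "(\<Sum>i=1..n. XX b i \<omega>) \<ge> b * real (2 ^ k div (k + 1))"
      using sum_lower[of b \<omega> k] assms w by (simp add: n_def)
    have "real n powr \<beta> * cesaro (XX b) n \<omega> = (real n powr \<beta> / real n) * (\<Sum>i=1..n. XX b i \<omega>)"
      by (simp add: cesaro_def)
    also have "\<dots> \<ge> 2 powr ((real k+1) * (\<beta>-1)) * (b * real (2 ^ k div (k + 1)))"
      unfolding np by (intro mult_left_mono S) auto
    finally show "K < \<bar>real n powr \<beta> * cesaro (XX b) n \<omega>\<bar>" using key by (simp add: algebra_simps)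
  qed
qed

theorem proposition1:
  fixes \<beta> b :: real
  assumes "0 < \<beta>" "\<beta> < 1" "b > 0"
  shows "\<exists>(M :: real measure) (X :: nat \<Rightarrow> real \<Rightarrow> real).
           prob_space M \<and>
           (\<forall>n\<ge>1. X n \<in> borel_measurable M) \<and>
           tendsto_in_prob_zero M (\<lambda>n \<omega>. real n powr \<beta> * X n \<omega>) \<and>
           (\<forall>n\<ge>1. AE \<omega> in M. \<bar>X n \<omega>\<bar> \<le> b) \<and>
           \<not> uniformly_tight M (\<lambda>n \<omega>. real n powr \<beta> * cesaro X n \<omega>)"
proof (intro exI conjI allI impI)
  interpret P: prob_space MM by (rule MM_prob)
  show "prob_space MM" by (rule MM_prob)
  show "XX b n \<in> borel_measurable MM" for n by (rule XX_meas)
  show "tendsto_in_prob_zero MM (\<lambda>n \<omega>. real n powr \<beta> * XX b n \<omega>)"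
    by (rule conv_prob[OF assms(3)])
  show "AE \<omega> in MM. \<bar>XX b n \<omega>\<bar> \<le> b" for n
    using assms(3) by (intro AE_I2) (simp add: XX_def indicator_def)
  show "\<not> uniformly_tight MM (\<lambda>n \<omega>. real n powr \<beta> * cesaro (XX b) n \<omega>)"
    unfolding uniformly_tight_def
  proof
    assume "\<forall>e>0. \<exists>K. (SUP n\<in>{1..}. measure MM {\<omega> \<in> space MM. K < \<bar>real n powr \<beta> * cesaro (XX b) n \<omega>\<bar>}) < e"
    then obtain K where K: "(SUP n\<in>{1..}. measure MM {\<omega> \<in> space MM. K < \<bar>real n powr \<beta> * cesaro (XX b) n \<omega>\<bar>}) < 1/2"
      by (meson divide_pos_pos zero_less_one zero_less_numeral)
    obtain n where n: "n \<ge> 1" "\<forall>\<omega>\<in>{0..<1}. K < \<bar>real n powr \<beta> * cesaro (XX b) n \<omega>\<bar>"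
      using big[OF assms, of K] by blast
    have fm: "(\<lambda>\<omega>. real n powr \<beta> * cesaro (XX b) n \<omega>) \<in> borel_measurable MM"
      unfolding cesaro_def by measurable
    have "1 = measure MM {0..<1::real}" by (subst measure_MM) auto
    also have "\<dots> \<le> measure MM {\<omega> \<in> space MM. K < \<bar>real n powr \<beta> * cesaro (XX b) n \<omega>\<bar>}"
    proof (rule P.finite_measure_mono)
      show "{0..<1} \<subseteq> {\<omega> \<in> space MM. K < \<bar>real n powr \<beta> * cesaro (XX b) n \<omega>\<bar>}"
        using n(2) by auto
      show "{\<omega> \<in> space MM. K < \<bar>real n powr \<beta> * cesaro (XX b) n \<omega>\<bar>} \<in> sets MM"
        using fm by measurable
    qed
    also have "\<dots> \<le> (SUP n\<in>{1..}. measure MM {\<omega> \<in> space MM. K < \<bar>real n powr \<beta> * cesaro (XX b) n \<omega>\<bar>})"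
      using n(1) by (intro cSUP_upper bdd_aboveI[where M=1]) (auto intro: P.prob_le_1)
    finally show False using K by simp
  qed
qed

end
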